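(* Let $A$ be a ring with a nilpotent two-sided ideal $\mathfrak{a}$, and assume the ring $\operatorname{gr}_{\mathfrak{a}}(A)=\bigoplus_{i\ge0}\mathfrak{a}^i/\mathfrak{a}^{i+1}$ is commutative. Let $s\in A$. (1) The set $\{s^j\}_{j\ge0}$ is a denominator set in $A$; let $A_s$ be the resulting ring of fractions. (2) Let $\bar A:=A/\mathfrak{a}$, let $\bar s$ be the image of $s$ in $\bar A$, and let $\mathfrak{a}_s$ be the kernel of the canonical ring surjection $A_s\to\bar A_{\bar s}$. Then $\mathfrak{a}_s=\mathfrak{a}A_s=A_s\mathfrak{a}$, and this is a nilpotent ideal. (3) For any $a\in A$ with image $\bar a\in\bar A$, the element $a$ is invertible in $A_s$ if and only if $\bar a$ is invertible in $\bar A_{\bar s}$.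
   Context: A subset $S$ of a ring $A$ is a denominator set if it is multiplicatively closed and satisfies the left and right Ore conditions and the left and right torsion conditions; then the (Ore) ring of fractions $A_S$ exists, with $A\to A_S$ making elements of $S$ invertible, universal for this property, with every element of the form $a_1s_1^{-1}=s_2^{-1}a_2$. *)

theory Defs
  imports "HOL-Algebra.Algebra"
begin

definition list_prod :: "('a, 'm) ring_scheme \<Rightarrow> 'a list \<Rightarrow> 'a" where
  "list_prod R xs = foldr (\<lambda>x acc. x \<otimes>\<^bsub>R\<^esub> acc) xs \<one>\<^bsub>R\<^esub>"

definition ideal_pow :: "('a, 'm) ring_scheme \<Rightarrow> 'a set \<Rightarrow> nat \<Rightarrow> 'a set" where
  "ideal_pow R I n = Idl\<^bsub>R\<^esub> {list_prod R xs | xs. length xs = n \<and> set xs \<subseteq> I}"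

definition nilpotent_ideal :: "('a, 'm) ring_scheme \<Rightarrow> 'a set \<Rightarrow> bool" where
  "nilpotent_ideal R I \<longleftrightarrow> (\<exists>n. ideal_pow R I n = {\<zero>\<^bsub>R\<^esub>})"

text \<open>The associated graded ring gr_I(R) = (+) I^i/I^(i+1) is commutative.
  Unfolded: homogeneous elements commute, i.e. for x in I^i, y in I^j,
  xy - yx lies in I^(i+j+1).\<close>
definition gr_commutative :: "('a, 'm) ring_scheme \<Rightarrow> 'a set \<Rightarrow> bool" where
  "gr_commutative R I \<longleftrightarrow>
     (\<forall>i j. \<forall>x \<in> ideal_pow R I i. \<forall>y \<in> ideal_pow R I j.
        x \<otimes>\<^bsub>R\<^esub> y \<ominus>\<^bsub>R\<^esub> y \<otimes>\<^bsub>R\<^esub> x \<in> ideal_pow R I (i + j + 1))"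

definition powers :: "('a, 'm) ring_scheme \<Rightarrow> 'a \<Rightarrow> 'a set" where
  "powers R s = {s [^]\<^bsub>R\<^esub> (j::nat) | j. True}"

definition denominator_set :: "('a, 'm) ring_scheme \<Rightarrow> 'a set \<Rightarrow> bool" where
  "denominator_set R S \<longleftrightarrow>
     S \<subseteq> carrier R \<and> \<one>\<^bsub>R\<^esub> \<in> S \<and> (\<forall>s\<in>S. \<forall>t\<in>S. s \<otimes>\<^bsub>R\<^esub> t \<in> S) \<and>
     \<comment> \<open>right Ore: aS meets sA\<close>
     (\<forall>a\<in>carrier R. \<forall>s\<in>S. \<exists>b\<in>carrier R. \<exists>t\<in>S. a \<otimes>\<^bsub>R\<^esub> t = s \<otimes>\<^bsub>R\<^esub> b) \<and>
     \<comment> \<open>left Ore: Sa meets As\<close>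
     (\<forall>a\<in>carrier R. \<forall>s\<in>S. \<exists>b\<in>carrier R. \<exists>t\<in>S. t \<otimes>\<^bsub>R\<^esub> a = b \<otimes>\<^bsub>R\<^esub> s) \<and>
     \<comment> \<open>right torsion: sa = 0 implies at = 0 for some t\<close>
     (\<forall>a\<in>carrier R. \<forall>s\<in>S. s \<otimes>\<^bsub>R\<^esub> a = \<zero>\<^bsub>R\<^esub> \<longrightarrow> (\<exists>t\<in>S. a \<otimes>\<^bsub>R\<^esub> t = \<zero>\<^bsub>R\<^esub>)) \<and>
     \<comment> \<open>left torsion: as = 0 implies ta = 0 for some t\<close>
     (\<forall>a\<in>carrier R. \<forall>s\<in>S. a \<otimes>\<^bsub>R\<^esub> s = \<zero>\<^bsub>R\<^esub> \<longrightarrow> (\<exists>t\<in>S. t \<otimes>\<^bsub>R\<^esub> a = \<zero>\<^bsub>R\<^esub>))"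

text \<open>This is the standard textbook characterisation of the Ore localization
  (equivalent to the universal property).\<close>
definition ring_of_fractions ::
  "('a, 'm) ring_scheme \<Rightarrow> 'a set \<Rightarrow> ('b, 'n) ring_scheme \<Rightarrow> ('a \<Rightarrow> 'b) \<Rightarrow> bool" where
  "ring_of_fractions R S B i \<longleftrightarrow>
     ring B \<and> i \<in> ring_hom R B \<and> i ` S \<subseteq> Units B \<and>
     (\<forall>b\<in>carrier B. \<exists>a\<in>carrier R. \<exists>s\<in>S. b = i a \<otimes>\<^bsub>B\<^esub> inv\<^bsub>B\<^esub> (i s)) \<and>
     (\<forall>b\<in>carrier B. \<exists>a\<in>carrier R. \<exists>s\<in>S. b = inv\<^bsub>B\<^esub> (i s) \<otimes>\<^bsub>B\<^esub> i a) \<and>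
     (\<forall>a\<in>carrier R. i a = \<zero>\<^bsub>B\<^esub> \<longleftrightarrow> (\<exists>t\<in>S. a \<otimes>\<^bsub>R\<^esub> t = \<zero>\<^bsub>R\<^esub>))"

text \<open>Extension of an ideal I of R along i : R \<rightarrow> B as a right ideal, I B
  (finite sums of i(x) b), and as a left ideal, B I (finite sums of b i(x)).\<close>
definition ext_right :: "('b, 'n) ring_scheme \<Rightarrow> ('a \<Rightarrow> 'b) \<Rightarrow> 'a set \<Rightarrow> 'b set" where
  "ext_right B i I = {foldr (\<lambda>p acc. (i (fst p) \<otimes>\<^bsub>B\<^esub> snd p) \<oplus>\<^bsub>B\<^esub> acc) ps \<zero>\<^bsub>B\<^esub>
                        | ps. set ps \<subseteq> I \<times> carrier B}"

definition ext_left :: "('b, 'n) ring_scheme \<Rightarrow> ('a \<Rightarrow> 'b) \<Rightarrow> 'a set \<Rightarrow> 'b set" where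
  "ext_left B i I = {foldr (\<lambda>p acc. (snd p \<otimes>\<^bsub>B\<^esub> i (fst p)) \<oplus>\<^bsub>B\<^esub> acc) ps \<zero>\<^bsub>B\<^esub>
                        | ps. set ps \<subseteq> I \<times> carrier B}"

end

theory Submission
  imports Defs
begin


lemma (in ring) list_prod_Nil [simp]: "list_prod R [] = \<one>"
  by (simp add: list_prod_def)

lemma (in ring) list_prod_Cons [simp]: "list_prod R (x # xs) = x \<otimes> list_prod R xs"
  by (simp add: list_prod_def)

lemma (in ring) list_prod_closed: "set xs \<subseteq> carrier R \<Longrightarrow> list_prod R xs \<in> carrier R"
  by (induct xs) auto

lemma (in ring) list_prod_replicate: "x \<in> carrier R \<Longrightarrow> list_prod R (replicate n x) = x [^] n"
  by (induct n) (auto, metis nat_pow_Suc nat_pow_Suc2)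

lemma (in ring) ideal_pow_ideal: "I \<subseteq> carrier R \<Longrightarrow> ideal (ideal_pow R I n) R"
  unfolding ideal_pow_def by (rule genideal_ideal) (auto intro!: list_prod_closed)

lemma (in ring) ideal_pow_gen: "I \<subseteq> carrier R \<Longrightarrow> length xs = n \<Longrightarrow> set xs \<subseteq> I
   \<Longrightarrow> list_prod R xs \<in> ideal_pow R I n"
  unfolding ideal_pow_def
  by (rule subsetD[OF genideal_self]) (auto intro!: list_prod_closed)

lemma (in ring) ideal_pow_0: "ideal_pow R I 0 = carrier R"
proof -
  have "{list_prod R xs |xs. length xs = 0 \<and> set xs \<subseteq> I} = {\<one>}" by auto
  thus ?thesis unfolding ideal_pow_def using genideal_one by simp
qed

lemma (in ideal) ideal_pow_1: "ideal_pow R I 1 = I"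
proof -
  have "{list_prod R xs |xs. length xs = 1 \<and> set xs \<subseteq> I} = I"
  proof
    show "{list_prod R xs |xs. length xs = 1 \<and> set xs \<subseteq> I} \<subseteq> I"
      by (auto simp: length_Suc_conv)
    show "I \<subseteq> {list_prod R xs |xs. length xs = 1 \<and> set xs \<subseteq> I}"
    proof
      fix x assume "x \<in> I"
      hence "list_prod R [x] = x" by simp
      thus "x \<in> {list_prod R xs |xs. length xs = 1 \<and> set xs \<subseteq> I}"
        using \<open>x \<in> I\<close> by (metis (mono_tags, lifting) One_nat_def empty_subsetI insert_subset
            length_Cons list.set(1) list.set(2) list.size(3) mem_Collect_eq)
    qed
  qed
  thus ?thesis unfolding ideal_pow_def
    using genideal_minimal[OF is_ideal] genideal_self[OF a_subset] by auto
qed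

lemma (in ideal) ideal_pow_Suc_sub: "ideal_pow R I (Suc n) \<subseteq> ideal_pow R I n"
proof -
  interpret J: ideal "ideal_pow R I n" R by (rule ideal_pow_ideal[OF a_subset])
  have "{list_prod R xs |xs. length xs = Suc n \<and> set xs \<subseteq> I} \<subseteq> ideal_pow R I n"
  proof
    fix z assume "z \<in> {list_prod R xs |xs. length xs = Suc n \<and> set xs \<subseteq> I}"
    then obtain x xs where z: "z = x \<otimes> list_prod R xs" "x \<in> I" "length xs = n" "set xs \<subseteq> I"
      by (auto simp: length_Suc_conv)
    have "list_prod R xs \<in> ideal_pow R I n" using ideal_pow_gen[OF a_subset z(3,4)] .
    thus "z \<in> ideal_pow R I n" using z by (simp add: J.I_l_closed)
  qed
  thus ?thesis unfolding ideal_pow_def[of R I "Suc n"]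
    by (rule genideal_minimal[OF J.is_ideal])
qed

lemma (in ideal) ideal_pow_antimono: "n \<le> m \<Longrightarrow> ideal_pow R I m \<subseteq> ideal_pow R I n"
  using lift_Suc_antimono_le[of "ideal_pow R I"] ideal_pow_Suc_sub by blast

lemma (in ideal) ideal_pow_mult_left:
  assumes y: "y \<in> I" and x: "x \<in> ideal_pow R I n"
  shows "y \<otimes> x \<in> ideal_pow R I (Suc n)"
proof -
  interpret Y: ideal "ideal_pow R I (Suc n)" R by (rule ideal_pow_ideal[OF a_subset])
  define T where "T = {x \<in> carrier R. \<forall>y\<in>I. y \<otimes> x \<in> ideal_pow R I (Suc n)}"
  have "ideal T R"
  proof (rule idealI)
    show "ring R" by (rule ring_axioms)
    show "subgroup T (add_monoid R)"
    proof (rule add.subgroupI)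
      show "T \<subseteq> carrier R" by (auto simp: T_def)
      show "T \<noteq> {}" using Y.zero_closed by (auto simp: T_def intro!: exI[of _ \<zero>])
      fix a b assume a: "a \<in> T" and b: "b \<in> T"
      show "\<ominus> a \<in> T" using a
        by (auto simp: T_def r_minus Y.a_inv_closed)
      show "a \<oplus> b \<in> T" using a b
        by (auto simp: T_def r_distr Y.a_closed)
    qed
    fix a r assume a: "a \<in> T" and r: "r \<in> carrier R"
    show "r \<otimes> a \<in> T" using a r
      by (auto simp: T_def m_assoc[symmetric] I_r_closed)
    show "a \<otimes> r \<in> T" using a r
      by (auto simp: T_def m_assoc[symmetric] Y.I_r_closed)
  qed
  moreover have "{list_prod R xs |xs. length xs = n \<and> set xs \<subseteq> I} \<subseteq> T"
  proof
    fix z assume "z \<in> {list_prod R xs |xs. length xs = n \<and> set xs \<subseteq> I}"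
    then obtain xs where z: "z = list_prod R xs" "length xs = n" "set xs \<subseteq> I" by auto
    have "\<forall>y\<in>I. y \<otimes> z \<in> ideal_pow R I (Suc n)"
    proof
      fix y assume "y \<in> I"
      thus "y \<otimes> z \<in> ideal_pow R I (Suc n)"
        using ideal_pow_gen[OF a_subset, of "y # xs" "Suc n"] z by auto
    qed
    thus "z \<in> T" using z list_prod_closed[of xs] a_subset by (auto simp: T_def)
  qed
  ultimately have "ideal_pow R I n \<subseteq> T" unfolding ideal_pow_def[of R I n]
    by (rule genideal_minimal)
  thus ?thesis using x y by (auto simp: T_def)
qed

lemma (in ring) one_minus_nil_unit:
  assumes t: "t \<in> carrier R" and nil: "t [^] (N::nat) = \<zero>"
  shows "\<one> \<ominus> t \<in> Units R"
proof -
  have "\<exists>g\<in>carrier R. (\<one> \<ominus> t) \<otimes> g = \<one> \<ominus> t [^] k \<and> g \<otimes> (\<one> \<ominus> t) = \<one> \<ominus> t [^] k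
          \<and> t \<otimes> g = g \<otimes> t" for k :: nat
  proof (induct k)
    case 0 show ?case using t by (intro bexI[of _ \<zero>]) (auto simp: minus_eq r_neg)
  next
    case (Suc k)
    then obtain g where g: "g \<in> carrier R" "(\<one> \<ominus> t) \<otimes> g = \<one> \<ominus> t [^] k"
      "g \<otimes> (\<one> \<ominus> t) = \<one> \<ominus> t [^] k" "t \<otimes> g = g \<otimes> t" by blast
    have tk: "t [^] k \<in> carrier R" using t by simp
    have "(\<one> \<ominus> t) \<otimes> (\<one> \<oplus> t \<otimes> g) = (\<one> \<ominus> t) \<oplus> t \<otimes> ((\<one> \<ominus> t) \<otimes> g)"
      using t g(1) by (simp add: r_distr l_distr minus_eq r_minus l_minus m_assoc a_ac)
    also have "\<dots> = \<one> \<ominus> t \<otimes> t [^] k" unfolding g(2) using t tk by (simp add: r_distr r_minus minus_eq a_assoc r_neg1)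
    finally have 1: "(\<one> \<ominus> t) \<otimes> (\<one> \<oplus> t \<otimes> g) = \<one> \<ominus> t [^] Suc k"
      unfolding nat_pow_Suc2[OF t] .
    have "(\<one> \<oplus> t \<otimes> g) \<otimes> (\<one> \<ominus> t) = (\<one> \<ominus> t) \<oplus> t \<otimes> (g \<otimes> (\<one> \<ominus> t))"
      using t g(1) by algebra
    also have "\<dots> = \<one> \<ominus> t \<otimes> t [^] k" unfolding g(3) using t tk by (simp add: r_distr r_minus minus_eq a_assoc r_neg1)
    finally have 2: "(\<one> \<oplus> t \<otimes> g) \<otimes> (\<one> \<ominus> t) = \<one> \<ominus> t [^] Suc k"
      unfolding nat_pow_Suc2[OF t] .
    have "(\<one> \<oplus> t \<otimes> g) \<otimes> t = t \<oplus> t \<otimes> (g \<otimes> t)" using t g(1) by algebra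
    also have "\<dots> = t \<oplus> t \<otimes> (t \<otimes> g)" using g(4) by simp
    also have "\<dots> = t \<otimes> (\<one> \<oplus> t \<otimes> g)" using t g(1) by (simp add: r_distr)
    finally have 3: "t \<otimes> (\<one> \<oplus> t \<otimes> g) = (\<one> \<oplus> t \<otimes> g) \<otimes> t" by simp
    show ?case using 1 2 3 t g(1) by (intro bexI[of _ "\<one> \<oplus> t \<otimes> g"]) auto
  qed
  from this[of N] obtain g where "g \<in> carrier R" "(\<one> \<ominus> t) \<otimes> g = \<one>" "g \<otimes> (\<one> \<ominus> t) = \<one>"
    using nil by (auto simp: minus_eq)
  thus ?thesis using t unfolding Units_def by auto
qed

lemma (in monoid) two_sided_inv_Units:
  assumes x: "x \<in> carrier G" and r: "r \<in> carrier G" "x \<otimes> r = \<one>"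
    and l: "l \<in> carrier G" "l \<otimes> x = \<one>"
  shows "x \<in> Units G"
proof -
  have "l = l \<otimes> (x \<otimes> r)" using r l by simp
  also have "\<dots> = r" using x r l by (metis m_assoc l_one)
  finally have "r \<otimes> x = \<one>" using l by simp
  thus ?thesis using x r unfolding Units_def by auto
qed

lemma (in monoid) unit_pow_inv:
  assumes u: "u \<in> Units G"
  shows "inv u [^] (n::nat) \<otimes> u [^] n = \<one>" "u [^] n \<otimes> inv u [^] n = \<one>"
proof -
  have uc: "u \<in> carrier G" "inv u \<in> carrier G" using u by auto
  show "inv u [^] (n::nat) \<otimes> u [^] n = \<one>"
  proof (induct n)
    case (Suc n)
    have a: "u [^] Suc n = u \<otimes> u [^] n" by (rule nat_pow_Suc2[OF uc(1)])
    have "inv u [^] Suc n \<otimes> u [^] Suc n = inv u [^] n \<otimes> (inv u \<otimes> u) \<otimes> u [^] n"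
      unfolding a using uc by (simp add: m_assoc)
    thus ?case using Suc u uc by simp
  qed simp
  show "u [^] (n::nat) \<otimes> inv u [^] n = \<one>"
  proof (induct n)
    case (Suc n)
    have a: "inv u [^] Suc n = inv u \<otimes> inv u [^] n" by (rule nat_pow_Suc2[OF uc(2)])
    have "u [^] Suc n \<otimes> inv u [^] Suc n = u [^] n \<otimes> (u \<otimes> inv u) \<otimes> inv u [^] n"
      unfolding a using uc by (simp add: m_assoc)
    thus ?case using Suc u uc by simp
  qed simp
qed

lemma (in monoid) unit_pow_inv_eq:
  assumes u: "u \<in> Units G" shows "inv (u [^] (n::nat)) = inv u [^] n"
  using unit_pow_inv[OF u, of n] u by (intro inv_char) auto

lemma (in monoid) unit_swap:
  assumes u: "u \<in> Units G" and c: "c \<in> carrier G" and d: "d \<in> carrier G"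
    and e: "c \<otimes> u [^] (p::nat) = u [^] (q::nat) \<otimes> d"
  shows "inv u [^] q \<otimes> c = d \<otimes> inv u [^] p"
proof -
  have uc: "u \<in> carrier G" "inv u \<in> carrier G" using u by auto
  have "inv u [^] q \<otimes> c = inv u [^] q \<otimes> c \<otimes> (u [^] p \<otimes> inv u [^] p)"
    using unit_pow_inv[OF u] uc c by simp
  also have "\<dots> = inv u [^] q \<otimes> (c \<otimes> u [^] p) \<otimes> inv u [^] p"
    using uc c by (simp add: m_assoc)
  also have "\<dots> = (inv u [^] q \<otimes> u [^] q) \<otimes> d \<otimes> inv u [^] p"
    unfolding e using uc d by (simp add: m_assoc)
  also have "\<dots> = d \<otimes> inv u [^] p" using unit_pow_inv[OF u] uc d by simp
  finally show ?thesis .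
qed

lemma (in monoid) unit_frac_ext:
  assumes u: "u \<in> Units G" and c: "c \<in> carrier G"
  shows "c \<otimes> inv u [^] (m::nat) = (c \<otimes> u [^] (j::nat)) \<otimes> inv u [^] (m + j)"
proof -
  have uc: "u \<in> carrier G" "inv u \<in> carrier G" using u by auto
  have "inv u [^] (m + j) = inv u [^] j \<otimes> inv u [^] m"
    using uc by (simp add: nat_pow_mult add.commute)
  hence "(c \<otimes> u [^] j) \<otimes> inv u [^] (m + j) = c \<otimes> (u [^] j \<otimes> inv u [^] j) \<otimes> inv u [^] m"
    using uc c by (simp add: m_assoc)
  thus ?thesis using unit_pow_inv[OF u] c uc by simp
qed

lemma (in monoid) unit_frac_ext_left:
  assumes u: "u \<in> Units G" and c: "c \<in> carrier G"
  shows "inv u [^] (m::nat) \<otimes> c = inv u [^] (m + j) \<otimes> (u [^] (j::nat) \<otimes> c)"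
proof -
  have uc: "u \<in> carrier G" "inv u \<in> carrier G" using u by auto
  have "inv u [^] (m + j) = inv u [^] m \<otimes> inv u [^] j"
    using uc by (simp add: nat_pow_mult)
  hence "inv u [^] (m + j) \<otimes> (u [^] j \<otimes> c) = inv u [^] m \<otimes> (inv u [^] j \<otimes> u [^] j) \<otimes> c"
    using uc c by (simp add: m_assoc)
  thus ?thesis using unit_pow_inv[OF u] c uc by simp
qed

lemma (in monoid) unit_cancel:
  assumes u: "u \<in> Units G" and c: "c \<in> carrier G" and c': "c' \<in> carrier G"
    and e: "c \<otimes> u [^] (m' + t) = c' \<otimes> u [^] (m + (t::nat))"
  shows "c \<otimes> inv u [^] m = c' \<otimes> inv u [^] (m'::nat)"
proof -
  have "c \<otimes> inv u [^] m = (c \<otimes> u [^] (m' + t)) \<otimes> inv u [^] (m + (m' + t))"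
    using unit_frac_ext[OF u c] .
  also have "\<dots> = (c' \<otimes> u [^] (m + t)) \<otimes> inv u [^] (m' + (m + t))"
    unfolding e by (simp add: ac_simps)
  also have "\<dots> = c' \<otimes> inv u [^] m'" using unit_frac_ext[OF u c'] by simp
  finally show ?thesis .
qed

lemma ring_hom_Units:
  assumes h: "h \<in> ring_hom R S" and x: "x \<in> Units R"
  shows "h x \<in> Units S"
proof -
  obtain y where y: "y \<in> carrier R" "y \<otimes>\<^bsub>R\<^esub> x = \<one>\<^bsub>R\<^esub>" "x \<otimes>\<^bsub>R\<^esub> y = \<one>\<^bsub>R\<^esub>" "x \<in> carrier R"
    using x unfolding Units_def by auto
  show ?thesis unfolding Units_def using y ring_hom_mult[OF h] ring_hom_one[OF h] ring_hom_closed[OF h]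
    by (metis (mono_tags, lifting) mem_Collect_eq)
qed




locale L0 = ideal I A for I and A (structure) +
  fixes s and N :: nat
  assumes s_carr: "s \<in> carrier A" and nilN: "ideal_pow A I N = {\<zero>}"
    and grc: "gr_commutative A I"
begin

definition ee where "ee a = a \<otimes> s \<ominus> s \<otimes> a"
definition dd where "dd a = s \<otimes> a \<ominus> a \<otimes> s"

lemma ee_carr: "a \<in> carrier A \<Longrightarrow> ee a \<in> carrier A"
  using s_carr by (simp add: ee_def)
lemma dd_carr: "a \<in> carrier A \<Longrightarrow> dd a \<in> carrier A"
  using s_carr by (simp add: dd_def)

lemma pow_comm_s: "s [^] (m::nat) \<otimes> s = s \<otimes> s [^] m"
  using s_carr by (metis nat_pow_Suc nat_pow_Suc2)

lemma minus_zero_self: "\<zero> \<ominus> \<zero> = \<zero>"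
  by (simp add: minus_eq)

lemma ipow_carr: "ideal_pow A I k \<subseteq> carrier A"
  using ideal_pow_ideal[OF a_subset, of k] by (simp add: ideal.axioms(1) additive_subgroup.a_subset)

lemma ee_pow: "a \<in> ideal_pow A I k \<Longrightarrow> (ee ^^ j) a \<in> ideal_pow A I (k + j)"
proof (induct j)
  case (Suc j)
  have s0: "s \<in> ideal_pow A I 0" using s_carr ideal_pow_0 by simp
  from grc[unfolded gr_commutative_def] Suc s0
  have "(ee ^^ j) a \<otimes> s \<ominus> s \<otimes> (ee ^^ j) a \<in> ideal_pow A I (k + j + 0 + 1)" by blast
  thus ?case using ee_def[of "(ee ^^ j) a"] by simp
qed simp

lemma dd_pow: "a \<in> ideal_pow A I k \<Longrightarrow> (dd ^^ j) a \<in> ideal_pow A I (k + j)"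
proof (induct j)
  case (Suc j)
  have s0: "s \<in> ideal_pow A I 0" using s_carr ideal_pow_0 by simp
  from grc[unfolded gr_commutative_def] Suc s0
  have "s \<otimes> (dd ^^ j) a \<ominus> (dd ^^ j) a \<otimes> s \<in> ideal_pow A I (0 + (k + j) + 1)" by blast
  thus ?case using dd_def[of "(dd ^^ j) a"] by simp
qed simp

lemma ee_nil: "a \<in> carrier A \<Longrightarrow> (ee ^^ N) a = \<zero>"
  using ee_pow[of a 0 N] ideal_pow_0 nilN by auto
lemma dd_nil: "a \<in> carrier A \<Longrightarrow> (dd ^^ N) a = \<zero>"
  using dd_pow[of a 0 N] ideal_pow_0 nilN by auto

lemma right_gen:
  assumes J: "J \<subseteq> carrier A" "\<And>x y. x\<in>J \<Longrightarrow> y\<in>J \<Longrightarrow> x \<oplus> y \<in> J"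
     "\<And>x. x\<in>J \<Longrightarrow> ee x \<in> J" "\<And>x. x\<in>J \<Longrightarrow> x \<otimes> s \<in> J"
  shows "a \<in> J \<Longrightarrow> (ee ^^ d) a = \<zero> \<Longrightarrow> \<exists>a'\<in>J. a \<otimes> s [^] (m + d) = s [^] m \<otimes> a'"
proof (induct d arbitrary: a m)
  case 0
  thus ?case using s_carr by (intro bexI[of _ a]) auto
next
  case (Suc d)
  have Jpow: "x \<otimes> s [^] n \<in> J" if "x \<in> J" for x and n :: nat
  proof (induct n)
    case 0 thus ?case using that J(1) by auto
  next
    case (Suc n)
    thus ?case using J that s_carr by (auto simp: m_assoc[symmetric])
  qed
  have aJ: "a \<in> carrier A" using Suc J by auto
  have IH: "\<exists>b\<in>J. ee a \<otimes> s [^] (m + d) = s [^] m \<otimes> b" for m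
    using Suc(1)[of "ee a" m] Suc(2,3) J(3) by (simp add: funpow_Suc_right del: funpow.simps)
  show ?case
  proof (induct m)
    case 0
    have "a \<otimes> s [^] (Suc d) \<in> J" by (rule Jpow[OF Suc(2)])
    thus ?case using aJ s_carr by (intro bexI[of _ "a \<otimes> s [^] (Suc d)"]) (simp del: nat_pow_Suc)
  next
    case (Suc m)
    then obtain a'' where a'': "a'' \<in> J" "a \<otimes> s [^] (m + Suc d) = s [^] m \<otimes> a''" by blast
    obtain b where b: "b \<in> J" "ee a \<otimes> s [^] (Suc m + d) = s [^] Suc m \<otimes> b" using IH by blast
    have c: "a'' \<in> carrier A" "b \<in> carrier A" using a'' b J by auto
    have e1: "a \<otimes> s = s \<otimes> a \<oplus> ee a" using aJ s_carr unfolding ee_def by algebra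
    have sp: "s [^] (Suc m + Suc d) = s \<otimes> s [^] (Suc m + d)"
      by (metis add_Suc_right nat_pow_Suc2 s_carr)
    have "a \<otimes> s [^] (Suc m + Suc d) = (a \<otimes> s) \<otimes> s [^] (Suc m + d)"
      unfolding sp using aJ s_carr by (simp add: m_assoc)
    also have "\<dots> = s \<otimes> (a \<otimes> s [^] (m + Suc d)) \<oplus> ee a \<otimes> s [^] (Suc m + d)"
      unfolding e1 using aJ s_carr ee_carr by (simp add: l_distr m_assoc)
    also have "\<dots> = s [^] Suc m \<otimes> (a'' \<oplus> b)"
      unfolding a''(2) b(2) using c s_carr by (simp add: r_distr m_assoc[symmetric] pow_comm_s)
    finally show ?case using a'' b J by blast
  qed
qed

lemma left_gen:
  assumes J: "J \<subseteq> carrier A" "\<And>x y. x\<in>J \<Longrightarrow> y\<in>J \<Longrightarrow> x \<oplus> y \<in> J"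
     "\<And>x. x\<in>J \<Longrightarrow> dd x \<in> J" "\<And>x. x\<in>J \<Longrightarrow> s \<otimes> x \<in> J"
  shows "a \<in> J \<Longrightarrow> (dd ^^ d) a = \<zero> \<Longrightarrow> \<exists>a'\<in>J. s [^] (m + d) \<otimes> a = a' \<otimes> s [^] m"
proof (induct d arbitrary: a m)
  case 0
  thus ?case using s_carr by (intro bexI[of _ a]) auto
next
  case (Suc d)
  have Jpow: "s [^] n \<otimes> x \<in> J" if "x \<in> J" for x and n :: nat
  proof (induct n)
    case 0 thus ?case using that J(1) by auto
  next
    case (Suc n)
    have "s [^] Suc n \<otimes> x = s \<otimes> (s [^] n \<otimes> x)"
      unfolding nat_pow_Suc2[OF s_carr] using subsetD[OF J(1) that] s_carr by (simp add: m_assoc)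
    thus ?case using J Suc by auto
  qed
  have aJ: "a \<in> carrier A" using Suc J by auto
  have IH: "\<exists>b\<in>J. s [^] (m + d) \<otimes> dd a = b \<otimes> s [^] m" for m
    using Suc(1)[of "dd a" m] Suc(2,3) J(3) by (simp add: funpow_Suc_right del: funpow.simps)
  show ?case
  proof (induct m)
    case 0
    have "s [^] (Suc d) \<otimes> a \<in> J" by (rule Jpow[OF Suc(2)])
    thus ?case using aJ s_carr by (intro bexI[of _ "s [^] (Suc d) \<otimes> a"]) (simp del: nat_pow_Suc)
  next
    case (Suc m)
    then obtain a'' where a'': "a'' \<in> J" "s [^] (m + Suc d) \<otimes> a = a'' \<otimes> s [^] m" by blast
    obtain b where b: "b \<in> J" "s [^] (Suc m + d) \<otimes> dd a = b \<otimes> s [^] Suc m" using IH by blast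
    have c: "a'' \<in> carrier A" "b \<in> carrier A" using a'' b J by auto
    have e1: "s \<otimes> a = a \<otimes> s \<oplus> dd a" using aJ s_carr unfolding dd_def by algebra
    have "s [^] (Suc m + Suc d) \<otimes> a = s [^] (Suc m + d) \<otimes> (s \<otimes> a)"
      using aJ s_carr by (simp add: m_assoc)
    also have "\<dots> = (s [^] (m + Suc d) \<otimes> a) \<otimes> s \<oplus> s [^] (Suc m + d) \<otimes> dd a"
      unfolding e1 using aJ s_carr dd_carr by (simp add: r_distr m_assoc)
    also have "\<dots> = (a'' \<oplus> b) \<otimes> s [^] Suc m"
      unfolding a''(2) b(2) using c s_carr by (simp add: l_distr m_assoc)
    finally show ?case using a'' b J by blast
  qed
qed

lemma right_ore_ideal:
  assumes Q: "ideal Q A" and a: "a \<in> Q"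
  shows "\<exists>a'\<in>Q. a \<otimes> s [^] (m + N) = s [^] m \<otimes> a'"
proof -
  interpret Q: ideal Q A by fact
  show ?thesis
  proof (rule right_gen)
    show "Q \<subseteq> carrier A" by (rule Q.a_subset)
    show "(ee ^^ N) a = \<zero>" using ee_nil a by auto
  qed (use a s_carr in \<open>auto simp: ee_def Q.I_l_closed Q.I_r_closed Q.a_closed minus_eq Q.a_inv_closed\<close>)
qed

lemma left_ore_ideal:
  assumes Q: "ideal Q A" and a: "a \<in> Q"
  shows "\<exists>a'\<in>Q. s [^] (m + N) \<otimes> a = a' \<otimes> s [^] m"
proof -
  interpret Q: ideal Q A by fact
  show ?thesis
  proof (rule left_gen)
    show "Q \<subseteq> carrier A" by (rule Q.a_subset)
    show "(dd ^^ N) a = \<zero>" using dd_nil a by auto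
  qed (use a s_carr in \<open>auto simp: dd_def Q.I_l_closed Q.I_r_closed Q.a_closed minus_eq Q.a_inv_closed\<close>)
qed


lemma denom: "denominator_set A (powers A s)"
proof -
  have P: "powers A s = {s [^] (j::nat) | j. True}" by (simp add: powers_def)
  have pw: "s [^] (j::nat) \<in> powers A s" for j unfolding P by blast
  have ro: "\<forall>a\<in>carrier A. \<forall>x\<in>powers A s. \<exists>b\<in>carrier A. \<exists>t\<in>powers A s. a \<otimes> t = x \<otimes> b"
  proof (intro ballI)
    fix a x assume h: "a \<in> carrier A" "x \<in> powers A s"
    obtain m where x: "x = s [^] (m::nat)" using h(2) unfolding P by blast
    obtain a' where a': "a' \<in> carrier A" "a \<otimes> s [^] (m + N) = s [^] m \<otimes> a'"
      using right_ore_ideal[OF oneideal h(1)] by blast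
    show "\<exists>b\<in>carrier A. \<exists>t\<in>powers A s. a \<otimes> t = x \<otimes> b"
      unfolding x using a' pw by blast
  qed
  have lo: "\<forall>a\<in>carrier A. \<forall>x\<in>powers A s. \<exists>b\<in>carrier A. \<exists>t\<in>powers A s. t \<otimes> a = b \<otimes> x"
  proof (intro ballI)
    fix a x assume h: "a \<in> carrier A" "x \<in> powers A s"
    obtain m where x: "x = s [^] (m::nat)" using h(2) unfolding P by blast
    obtain a' where a': "a' \<in> carrier A" "s [^] (m + N) \<otimes> a = a' \<otimes> s [^] m"
      using left_ore_ideal[OF oneideal h(1)] by blast
    show "\<exists>b\<in>carrier A. \<exists>t\<in>powers A s. t \<otimes> a = b \<otimes> x"
      unfolding x using a' pw by blast
  qed
  have rt: "\<forall>a\<in>carrier A. \<forall>x\<in>powers A s. x \<otimes> a = \<zero> \<longrightarrow> (\<exists>t\<in>powers A s. a \<otimes> t = \<zero>)"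
  proof (intro ballI impI)
    fix a x assume h: "a \<in> carrier A" "x \<in> powers A s" "x \<otimes> a = \<zero>"
    obtain m where x: "x = s [^] (m::nat)" using h(2) unfolding P by blast
    define J where "J = {y \<in> carrier A. s [^] m \<otimes> y = \<zero>}"
    have "\<exists>a'\<in>J. a \<otimes> s [^] (m + N) = s [^] m \<otimes> a'"
    proof (rule right_gen)
      show "J \<subseteq> carrier A" by (auto simp: J_def)
      show "a \<in> J" using h x by (auto simp: J_def)
      show "(ee ^^ N) a = \<zero>" using ee_nil h by auto
      show "y \<oplus> z \<in> J" if "y \<in> J" "z \<in> J" for y z
        using that s_carr by (auto simp: J_def r_distr)
      show "y \<otimes> s \<in> J" if "y \<in> J" for y
      proof -
        have y: "y \<in> carrier A" "s [^] m \<otimes> y = \<zero>" using that by (auto simp: J_def)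
        have "s [^] m \<otimes> (y \<otimes> s) = (s [^] m \<otimes> y) \<otimes> s" using y(1) s_carr by (simp add: m_assoc)
        also have "\<dots> = \<zero>" using s_carr by (simp only: y(2) l_null)
        finally show ?thesis using y(1) s_carr unfolding J_def by blast
      qed
      show "ee y \<in> J" if "y \<in> J" for y
      proof -
        have y: "y \<in> carrier A" "s [^] m \<otimes> y = \<zero>" using that by (auto simp: J_def)
        have "s [^] m \<otimes> ee y = (s [^] m \<otimes> y) \<otimes> s \<ominus> (s [^] m \<otimes> s) \<otimes> y"
          using y(1) s_carr unfolding ee_def by (simp add: r_distr r_minus minus_eq m_assoc)
        also have "\<dots> = (s [^] m \<otimes> y) \<otimes> s \<ominus> s \<otimes> (s [^] m \<otimes> y)"
          unfolding pow_comm_s using y(1) s_carr by (simp add: m_assoc)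
        also have "\<dots> = \<zero> \<otimes> s \<ominus> s \<otimes> \<zero>" by (simp only: y(2))
        also have "\<dots> = \<zero>" using s_carr by (simp only: l_null r_null) (rule minus_zero_self)
        finally have "s [^] m \<otimes> ee y = \<zero>" .
        thus ?thesis using y(1) ee_carr unfolding J_def by blast
      qed
    qed
    then obtain a' where a': "a' \<in> J" "a \<otimes> s [^] (m + N) = s [^] m \<otimes> a'" by blast
    have "a \<otimes> s [^] (m + N) = \<zero>" using a' unfolding J_def by simp
    thus "\<exists>t\<in>powers A s. a \<otimes> t = \<zero>" using pw by blast
  qed
  have lt: "\<forall>a\<in>carrier A. \<forall>x\<in>powers A s. a \<otimes> x = \<zero> \<longrightarrow> (\<exists>t\<in>powers A s. t \<otimes> a = \<zero>)"
  proof (intro ballI impI)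
    fix a x assume h: "a \<in> carrier A" "x \<in> powers A s" "a \<otimes> x = \<zero>"
    obtain m where x: "x = s [^] (m::nat)" using h(2) unfolding P by blast
    define J where "J = {y \<in> carrier A. y \<otimes> s [^] m = \<zero>}"
    have "\<exists>a'\<in>J. s [^] (m + N) \<otimes> a = a' \<otimes> s [^] m"
    proof (rule left_gen)
      show "J \<subseteq> carrier A" by (auto simp: J_def)
      show "a \<in> J" using h x by (auto simp: J_def)
      show "(dd ^^ N) a = \<zero>" using dd_nil h by auto
      show "y \<oplus> z \<in> J" if "y \<in> J" "z \<in> J" for y z
        using that s_carr by (auto simp: J_def l_distr)
      show "s \<otimes> y \<in> J" if "y \<in> J" for y
      proof -
        have y: "y \<in> carrier A" "y \<otimes> s [^] m = \<zero>" using that by (auto simp: J_def)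
        have "(s \<otimes> y) \<otimes> s [^] m = s \<otimes> (y \<otimes> s [^] m)" using y(1) s_carr by (simp add: m_assoc)
        also have "\<dots> = \<zero>" using s_carr by (simp only: y(2) r_null)
        finally show ?thesis using y(1) s_carr unfolding J_def by blast
      qed
      show "dd y \<in> J" if "y \<in> J" for y
      proof -
        have y: "y \<in> carrier A" "y \<otimes> s [^] m = \<zero>" using that by (auto simp: J_def)
        have "dd y \<otimes> s [^] m = s \<otimes> (y \<otimes> s [^] m) \<ominus> y \<otimes> (s \<otimes> s [^] m)"
          using y(1) s_carr unfolding dd_def by (simp add: l_distr l_minus minus_eq m_assoc)
        also have "\<dots> = s \<otimes> (y \<otimes> s [^] m) \<ominus> (y \<otimes> s [^] m) \<otimes> s"
          using y(1) s_carr by (simp add: m_assoc pow_comm_s)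
        also have "\<dots> = s \<otimes> \<zero> \<ominus> \<zero> \<otimes> s" by (simp only: y(2))
        also have "\<dots> = \<zero>" using s_carr by (simp only: l_null r_null) (rule minus_zero_self)
        finally have "dd y \<otimes> s [^] m = \<zero>" .
        thus ?thesis using y(1) dd_carr unfolding J_def by blast
      qed
    qed
    then obtain a' where a': "a' \<in> J" "s [^] (m + N) \<otimes> a = a' \<otimes> s [^] m" by blast
    have "s [^] (m + N) \<otimes> a = \<zero>" using a' unfolding J_def by simp
    thus "\<exists>t\<in>powers A s. t \<otimes> a = \<zero>" using pw by blast
  qed
  have sub: "powers A s \<subseteq> carrier A" unfolding P using s_carr by blast
  have one: "\<one> \<in> powers A s" using pw[of 0] by simp
  have cl: "\<forall>x\<in>powers A s. \<forall>y\<in>powers A s. x \<otimes> y \<in> powers A s"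
  proof (intro ballI)
    fix x y assume "x \<in> powers A s" "y \<in> powers A s"
    then obtain i j where "x = s [^] (i::nat)" "y = s [^] (j::nat)" unfolding P by blast
    thus "x \<otimes> y \<in> powers A s" using pw[of "i + j"] s_carr by (simp add: nat_pow_mult)
  qed
  show ?thesis unfolding denominator_set_def
    using sub one cl ro lo rt lt by (intro conjI)
qed

lemma comm_mod: "a \<in> carrier A \<Longrightarrow> b \<in> carrier A \<Longrightarrow> a \<otimes> b \<ominus> b \<otimes> a \<in> I"
  using grc[unfolded gr_commutative_def, rule_format, of a 0 b 0] ideal_pow_0 ideal_pow_1 by simp

end



lemma (in monoid) unit_rcancel:
  assumes u: "u \<in> Units G" and c: "c \<in> carrier G" and d: "d \<in> carrier G"
    and e: "c \<otimes> inv u [^] (n::nat) = d \<otimes> inv u [^] n"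
  shows "c = d"
proof -
  have uc: "u \<in> carrier G" "inv u \<in> carrier G" using u by auto
  have "c = (c \<otimes> inv u [^] n) \<otimes> u [^] n" using unit_pow_inv[OF u, of n] uc c by (simp add: m_assoc)
  also have "\<dots> = d" unfolding e using unit_pow_inv[OF u, of n] uc d by (simp add: m_assoc)
  finally show ?thesis .
qed

lemma (in monoid) unit_lcancel:
  assumes u: "u \<in> Units G" and c: "c \<in> carrier G" and d: "d \<in> carrier G"
    and e: "inv u [^] (n::nat) \<otimes> c = inv u [^] n \<otimes> d"
  shows "c = d"
proof -
  have uc: "u \<in> carrier G" "inv u \<in> carrier G" using u by auto
  have "c = u [^] n \<otimes> (inv u [^] n \<otimes> c)" using unit_pow_inv[OF u, of n] uc c by (simp add: m_assoc[symmetric])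
  also have "\<dots> = d" unfolding e using unit_pow_inv[OF u, of n] uc d by (simp add: m_assoc[symmetric])
  finally show ?thesis .
qed

lemma (in monoid) mult_frac:
  assumes y: "y \<in> carrier G" and c: "c1 \<in> carrier G" "c2 \<in> carrier G" "c2' \<in> carrier G"
    and e: "y [^] (m1::nat) \<otimes> c2 = c2' \<otimes> y [^] (m1 + N)"
  shows "(c1 \<otimes> y [^] m1) \<otimes> (c2 \<otimes> y [^] (m2::nat)) = (c1 \<otimes> c2') \<otimes> y [^] (m1 + N + m2)"
proof -
  have "(c1 \<otimes> y [^] m1) \<otimes> (c2 \<otimes> y [^] m2) = c1 \<otimes> (y [^] m1 \<otimes> c2) \<otimes> y [^] m2"
    using y c by (simp add: m_assoc)
  also have "\<dots> = (c1 \<otimes> c2') \<otimes> (y [^] (m1 + N) \<otimes> y [^] m2)"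
    unfolding e using y c by (simp add: m_assoc)
  finally show ?thesis using y by (simp add: nat_pow_mult)
qed

lemma (in ring) add_frac:
  assumes u: "u \<in> Units R" and c: "c1 \<in> carrier R" "c2 \<in> carrier R"
  shows "c1 \<otimes> inv u [^] (m1::nat) \<oplus> c2 \<otimes> inv u [^] (m2::nat)
       = (c1 \<otimes> u [^] m2 \<oplus> c2 \<otimes> u [^] m1) \<otimes> inv u [^] (m1 + m2)"
proof -
  have uc: "u \<in> carrier R" "inv u \<in> carrier R" using u by auto
  have "c1 \<otimes> inv u [^] m1 = (c1 \<otimes> u [^] m2) \<otimes> inv u [^] (m1 + m2)"
    by (rule unit_frac_ext[OF u c(1)])
  moreover have "c2 \<otimes> inv u [^] m2 = (c2 \<otimes> u [^] m1) \<otimes> inv u [^] (m1 + m2)"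
    using unit_frac_ext[OF u c(2), of m2 m1] by (simp add: add.commute)
  ultimately show ?thesis using uc c by (simp add: l_distr)
qed

lemma (in ring) minus_mult_distr:
  "x \<in> carrier R \<Longrightarrow> y \<in> carrier R \<Longrightarrow> z \<in> carrier R \<Longrightarrow> (x \<ominus> y) \<otimes> z = x \<otimes> z \<ominus> y \<otimes> z"
  by (simp add: minus_eq l_distr l_minus)

lemma hom_minus:
  assumes "ring_hom_ring R S h" "x \<in> carrier R" "y \<in> carrier R"
  shows "h (x \<ominus>\<^bsub>R\<^esub> y) = h x \<ominus>\<^bsub>S\<^esub> h y"
proof -
  interpret ring_hom_ring R S h by fact
  show ?thesis using assms(2,3) by (simp add: R.minus_eq S.minus_eq)
qed

context L0 begin
lemma pw: "s [^] (j::nat) \<in> powers A s" by (auto simp: powers_def)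
lemma s_pow1: "s [^] (1::nat) = s" using s_carr by simp
end

locale L1 = L0 I A s N for I and A (structure) and s N +
  fixes B :: "'x ring" and i :: "'a \<Rightarrow> 'x" and C :: "'y ring" and k :: "'a set \<Rightarrow> 'y"
  assumes fB: "ring_of_fractions A (powers A s) B i"
    and fC: "ring_of_fractions (A Quot I) (powers (A Quot I) (I +> s)) C k"

context L1 begin

lemma ringB: "ring B" using fB by (simp add: ring_of_fractions_def)
lemma ringC: "ring C" using fC by (simp add: ring_of_fractions_def)
lemma ringQ: "ring (A Quot I)" by (rule quotient_is_ring)
end

sublocale L1 \<subseteq> B: ring B by (rule ringB)
sublocale L1 \<subseteq> C: ring C by (rule ringC)
sublocale L1 \<subseteq> Q: ring "A Quot I" by (rule ringQ)
sublocale L1 \<subseteq> iH: ring_hom_ring A B i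
  using fB ringB by (intro ring_hom_ringI2 ring_axioms) (auto simp: ring_of_fractions_def)
sublocale L1 \<subseteq> kH: ring_hom_ring "A Quot I" C k
  using fC ringC ringQ by (intro ring_hom_ringI2) (auto simp: ring_of_fractions_def)

context L1 begin

definition kap where "kap a = k (I +> a)"
definition u where "u = i s"
definition w where "w = inv\<^bsub>B\<^esub> u"
definition q where "q = kap s"
definition v where "v = inv\<^bsub>C\<^esub> q"

lemma kap_hom: "kap \<in> ring_hom A C"
proof -
  have "k \<circ> (\<lambda>a. I +> a) \<in> ring_hom A C"
    by (rule ring_hom_trans[OF _ kH.homh]) (use rcos_ring_hom in simp)
  moreover have "k \<circ> (\<lambda>a. I +> a) = kap" by (rule ext) (simp add: kap_def)
  ultimately show ?thesis by simp
qed

end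

sublocale L1 \<subseteq> kapH: ring_hom_ring A C kap
  using kap_hom ringC by (intro ring_hom_ringI2 ring_axioms)

context L1 begin

lemma rcosH: "ring_hom_ring A (A Quot I) (\<lambda>a. I +> a)"
  using rcos_ring_hom_ring by simp

lemma u_unit: "u \<in> Units B"
  using fB pw[of 1] s_pow1 unfolding ring_of_fractions_def u_def by auto

lemma q_unit: "q \<in> Units C"
proof -
  have "(I +> s) [^]\<^bsub>A Quot I\<^esub> (1::nat) = I +> s"
    using ring_hom_ring.hom_nat_pow[OF rcosH s_carr, of 1] s_pow1 by simp
  hence "I +> s \<in> powers (A Quot I) (I +> s)" unfolding powers_def by (metis (mono_tags, lifting) mem_Collect_eq)
  thus ?thesis using fC unfolding ring_of_fractions_def q_def kap_def by auto
qed

lemma w_carr: "w \<in> carrier B" using u_unit unfolding w_def by auto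
lemma v_carr: "v \<in> carrier C" using q_unit unfolding v_def by auto
lemma u_carr: "u \<in> carrier B" using u_unit by auto
lemma q_carr: "q \<in> carrier C" using q_unit by auto

lemma i_pow: "i (s [^] (m::nat)) = u [^]\<^bsub>B\<^esub> m"
  unfolding u_def using iH.hom_nat_pow[OF s_carr] .
lemma kap_pow: "kap (s [^] (m::nat)) = q [^]\<^bsub>C\<^esub> m"
  unfolding q_def using kapH.hom_nat_pow[OF s_carr] .

lemma repB: assumes b: "b \<in> carrier B"
  shows "\<exists>a m. a \<in> carrier A \<and> b = i a \<otimes>\<^bsub>B\<^esub> w [^]\<^bsub>B\<^esub> (m::nat)"
proof -
  obtain a t where "a \<in> carrier A" "t \<in> powers A s" "b = i a \<otimes>\<^bsub>B\<^esub> inv\<^bsub>B\<^esub> (i t)"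
    using fB b unfolding ring_of_fractions_def by blast
  moreover obtain m where "t = s [^] (m::nat)" using \<open>t \<in> powers A s\<close> unfolding powers_def by blast
  ultimately have "b = i a \<otimes>\<^bsub>B\<^esub> w [^]\<^bsub>B\<^esub> m"
    using B.unit_pow_inv_eq[OF u_unit] i_pow by (simp add: w_def)
  thus ?thesis using \<open>a \<in> carrier A\<close> by blast
qed

lemma repB_left: assumes b: "b \<in> carrier B"
  shows "\<exists>a m. a \<in> carrier A \<and> b = w [^]\<^bsub>B\<^esub> (m::nat) \<otimes>\<^bsub>B\<^esub> i a"
proof -
  obtain a t where "a \<in> carrier A" "t \<in> powers A s" "b = inv\<^bsub>B\<^esub> (i t) \<otimes>\<^bsub>B\<^esub> i a"
    using fB b unfolding ring_of_fractions_def by blast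
  moreover obtain m where "t = s [^] (m::nat)" using \<open>t \<in> powers A s\<close> unfolding powers_def by blast
  ultimately have "b = w [^]\<^bsub>B\<^esub> m \<otimes>\<^bsub>B\<^esub> i a"
    using B.unit_pow_inv_eq[OF u_unit] i_pow by (simp add: w_def)
  thus ?thesis using \<open>a \<in> carrier A\<close> by blast
qed

lemma repC: assumes c: "c \<in> carrier C"
  shows "\<exists>a m. a \<in> carrier A \<and> c = kap a \<otimes>\<^bsub>C\<^esub> v [^]\<^bsub>C\<^esub> (m::nat)"
proof -
  obtain Xc t where X: "Xc \<in> carrier (A Quot I)" "t \<in> powers (A Quot I) (I +> s)"
     "c = k Xc \<otimes>\<^bsub>C\<^esub> inv\<^bsub>C\<^esub> (k t)"
    using fC c unfolding ring_of_fractions_def by blast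
  obtain a where a: "a \<in> carrier A" "Xc = I +> a"
    using X(1) unfolding FactRing_def A_RCOSETS_def' by auto
  obtain m where "t = (I +> s) [^]\<^bsub>A Quot I\<^esub> (m::nat)" using X(2) unfolding powers_def by blast
  hence "t = I +> s [^] m" using ring_hom_ring.hom_nat_pow[OF rcosH s_carr, of m] by simp
  hence "k t = q [^]\<^bsub>C\<^esub> m" using kap_pow[of m] by (simp add: kap_def)
  thus ?thesis using X(3) a C.unit_pow_inv_eq[OF q_unit] unfolding v_def kap_def by metis
qed

lemma kerB: assumes a: "a \<in> carrier A"
  shows "(i a = \<zero>\<^bsub>B\<^esub>) \<longleftrightarrow> (\<exists>j::nat. a \<otimes> s [^] j = \<zero>)"
  using fB a unfolding ring_of_fractions_def powers_def by blast

lemma rcos_eq_I: "x \<in> carrier A \<Longrightarrow> (I +> x = I) \<longleftrightarrow> x \<in> I"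
  using rcos_const_imp_mem a_rcos_zero[OF is_ideal] by blast

lemma kerC: assumes a: "a \<in> carrier A"
  shows "(kap a = \<zero>\<^bsub>C\<^esub>) \<longleftrightarrow> (\<exists>j::nat. a \<otimes> s [^] j \<in> I)"
proof -
  have X: "I +> a \<in> carrier (A Quot I)" using ring_hom_closed[OF rcos_ring_hom a] .
  have 1: "(kap a = \<zero>\<^bsub>C\<^esub>) \<longleftrightarrow> (\<exists>t\<in>powers (A Quot I) (I +> s). (I +> a) \<otimes>\<^bsub>A Quot I\<^esub> t = \<zero>\<^bsub>A Quot I\<^esub>)"
    using fC X unfolding ring_of_fractions_def kap_def by blast
  have 2: "(I +> a) \<otimes>\<^bsub>A Quot I\<^esub> ((I +> s) [^]\<^bsub>A Quot I\<^esub> j) = I +> (a \<otimes> s [^] j)" for j :: nat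
    using ring_hom_ring.hom_nat_pow[OF rcosH s_carr, of j] ring_hom_mult[OF rcos_ring_hom a, of "s [^] j"] s_carr
    by simp
  have 3: "\<zero>\<^bsub>A Quot I\<^esub> = I" by (simp add: FactRing_def)
  have 4: "(\<exists>t\<in>powers (A Quot I) (I +> s). (I +> a) \<otimes>\<^bsub>A Quot I\<^esub> t = I) \<longleftrightarrow> (\<exists>j::nat. a \<otimes> s [^] j \<in> I)"
  proof
    assume "\<exists>t\<in>powers (A Quot I) (I +> s). (I +> a) \<otimes>\<^bsub>A Quot I\<^esub> t = I"
    then obtain j :: nat where "(I +> a) \<otimes>\<^bsub>A Quot I\<^esub> ((I +> s) [^]\<^bsub>A Quot I\<^esub> j) = I"
      unfolding powers_def by blast
    hence "I +> (a \<otimes> s [^] j) = I" using 2 by simp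
    thus "\<exists>j::nat. a \<otimes> s [^] j \<in> I" using rcos_eq_I a s_carr by auto
  next
    assume "\<exists>j::nat. a \<otimes> s [^] j \<in> I"
    then obtain j :: nat where "a \<otimes> s [^] j \<in> I" by blast
    hence "(I +> a) \<otimes>\<^bsub>A Quot I\<^esub> ((I +> s) [^]\<^bsub>A Quot I\<^esub> j) = I"
      using 2 rcos_eq_I a s_carr by simp
    moreover have "(I +> s) [^]\<^bsub>A Quot I\<^esub> j \<in> powers (A Quot I) (I +> s)"
      unfolding powers_def by blast
    ultimately show "\<exists>t\<in>powers (A Quot I) (I +> s). (I +> a) \<otimes>\<^bsub>A Quot I\<^esub> t = I" by blast
  qed
  show ?thesis unfolding 1 3 4 ..
qed

lemma kap_I: "x \<in> I \<Longrightarrow> kap x = \<zero>\<^bsub>C\<^esub>"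
proof -
  assume x: "x \<in> I"
  have "I +> x = \<zero>\<^bsub>A Quot I\<^esub>" using a_rcos_zero[OF is_ideal x] by (simp add: FactRing_def)
  thus ?thesis unfolding kap_def using kH.hom_zero by simp
qed

lemma oreBC:
  assumes Q: "ideal Q A" and a: "a \<in> Q"
  shows "\<exists>a'\<in>Q. w [^]\<^bsub>B\<^esub> m \<otimes>\<^bsub>B\<^esub> i a = i a' \<otimes>\<^bsub>B\<^esub> w [^]\<^bsub>B\<^esub> (m + N)
            \<and> v [^]\<^bsub>C\<^esub> m \<otimes>\<^bsub>C\<^esub> kap a = kap a' \<otimes>\<^bsub>C\<^esub> v [^]\<^bsub>C\<^esub> (m + N)"
proof -
  interpret Q: ideal Q A by fact
  obtain a' where a': "a' \<in> Q" "a \<otimes> s [^] (m + N) = s [^] m \<otimes> a'"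
    using right_ore_ideal[OF Q a] by blast
  have c: "a \<in> carrier A" "a' \<in> carrier A" using a a' Q.a_subset by auto
  have "i a \<otimes>\<^bsub>B\<^esub> u [^]\<^bsub>B\<^esub> (m + N) = u [^]\<^bsub>B\<^esub> m \<otimes>\<^bsub>B\<^esub> i a'"
    using arg_cong[OF a'(2), of i] c s_carr by (simp add: i_pow)
  hence 1: "w [^]\<^bsub>B\<^esub> m \<otimes>\<^bsub>B\<^esub> i a = i a' \<otimes>\<^bsub>B\<^esub> w [^]\<^bsub>B\<^esub> (m + N)"
    unfolding w_def using B.unit_swap[OF u_unit] c by simp
  have "kap a \<otimes>\<^bsub>C\<^esub> q [^]\<^bsub>C\<^esub> (m + N) = q [^]\<^bsub>C\<^esub> m \<otimes>\<^bsub>C\<^esub> kap a'"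
    using arg_cong[OF a'(2), of kap] c s_carr by (simp add: kap_pow)
  hence 2: "v [^]\<^bsub>C\<^esub> m \<otimes>\<^bsub>C\<^esub> kap a = kap a' \<otimes>\<^bsub>C\<^esub> v [^]\<^bsub>C\<^esub> (m + N)"
    unfolding v_def using C.unit_swap[OF q_unit] c by simp
  show ?thesis using 1 2 a' by blast
qed

lemma WD:
  assumes a: "a \<in> carrier A" and a': "a' \<in> carrier A"
    and e: "i a \<otimes>\<^bsub>B\<^esub> w [^]\<^bsub>B\<^esub> (m::nat) = i a' \<otimes>\<^bsub>B\<^esub> w [^]\<^bsub>B\<^esub> (m'::nat)"
  shows "kap a \<otimes>\<^bsub>C\<^esub> v [^]\<^bsub>C\<^esub> m = kap a' \<otimes>\<^bsub>C\<^esub> v [^]\<^bsub>C\<^esub> m'"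
proof -
  have "(i a \<otimes>\<^bsub>B\<^esub> u [^]\<^bsub>B\<^esub> m') \<otimes>\<^bsub>B\<^esub> w [^]\<^bsub>B\<^esub> (m + m')
      = (i a' \<otimes>\<^bsub>B\<^esub> u [^]\<^bsub>B\<^esub> m) \<otimes>\<^bsub>B\<^esub> w [^]\<^bsub>B\<^esub> (m + m')"
    using e B.unit_frac_ext[OF u_unit, of "i a" m m'] B.unit_frac_ext[OF u_unit, of "i a'" m' m] a a'
    unfolding w_def by (simp add: add.commute)
  hence "i a \<otimes>\<^bsub>B\<^esub> u [^]\<^bsub>B\<^esub> m' = i a' \<otimes>\<^bsub>B\<^esub> u [^]\<^bsub>B\<^esub> m"
    using B.unit_rcancel[OF u_unit] a a' u_carr unfolding w_def by simp
  hence "i (a \<otimes> s [^] m' \<ominus> a' \<otimes> s [^] m) = \<zero>\<^bsub>B\<^esub>"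
    using a a' s_carr u_carr hom_minus[OF iH.is_ring_hom_ring, of "a \<otimes> s [^] m'" "a' \<otimes> s [^] m"]
    by (simp add: i_pow)
  then obtain j :: nat where "(a \<otimes> s [^] m' \<ominus> a' \<otimes> s [^] m) \<otimes> s [^] j = \<zero>"
    using kerB a a' s_carr by (meson minus_closed m_closed nat_pow_closed)
  hence "a \<otimes> s [^] (m' + j) \<ominus> a' \<otimes> s [^] (m + j) = \<zero>"
    using a a' s_carr by (simp add: minus_mult_distr m_assoc nat_pow_mult)
  hence eqA: "a \<otimes> s [^] (m' + j) = a' \<otimes> s [^] (m + j)" using a a' s_carr by simp
  have "kap a \<otimes>\<^bsub>C\<^esub> q [^]\<^bsub>C\<^esub> (m' + j) = kap a' \<otimes>\<^bsub>C\<^esub> q [^]\<^bsub>C\<^esub> (m + j)"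
    using arg_cong[OF eqA, of kap] a a' s_carr by (simp add: kap_pow)
  thus ?thesis using C.unit_cancel[OF q_unit] a a' unfolding v_def by simp
qed

definition phi0 where
  "phi0 b = (SOME c. \<exists>a m. a \<in> carrier A \<and> b = i a \<otimes>\<^bsub>B\<^esub> w [^]\<^bsub>B\<^esub> (m::nat)
                        \<and> c = kap a \<otimes>\<^bsub>C\<^esub> v [^]\<^bsub>C\<^esub> m)"

lemma phi0_eq: assumes a: "a \<in> carrier A"
  shows "phi0 (i a \<otimes>\<^bsub>B\<^esub> w [^]\<^bsub>B\<^esub> (m::nat)) = kap a \<otimes>\<^bsub>C\<^esub> v [^]\<^bsub>C\<^esub> m"
  unfolding phi0_def
proof (rule someI2)
  show "\<exists>a' m'. a' \<in> carrier A \<and> i a \<otimes>\<^bsub>B\<^esub> w [^]\<^bsub>B\<^esub> m = i a' \<otimes>\<^bsub>B\<^esub> w [^]\<^bsub>B\<^esub> (m'::nat)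
      \<and> kap a \<otimes>\<^bsub>C\<^esub> v [^]\<^bsub>C\<^esub> m = kap a' \<otimes>\<^bsub>C\<^esub> v [^]\<^bsub>C\<^esub> m'"
    using a by blast
next
  fix c assume "\<exists>a' m'. a' \<in> carrier A \<and> i a \<otimes>\<^bsub>B\<^esub> w [^]\<^bsub>B\<^esub> m = i a' \<otimes>\<^bsub>B\<^esub> w [^]\<^bsub>B\<^esub> (m'::nat)
      \<and> c = kap a' \<otimes>\<^bsub>C\<^esub> v [^]\<^bsub>C\<^esub> m'"
  thus "c = kap a \<otimes>\<^bsub>C\<^esub> v [^]\<^bsub>C\<^esub> m" using WD a by metis
qed

lemma phi0_i: "a \<in> carrier A \<Longrightarrow> phi0 (i a) = kap a"
  using phi0_eq[of a 0] by simp

lemma phi0_hom: "phi0 \<in> ring_hom B C"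
proof (rule ring_hom_memI)
  fix x assume "x \<in> carrier B"
  then obtain a m where "a \<in> carrier A" "x = i a \<otimes>\<^bsub>B\<^esub> w [^]\<^bsub>B\<^esub> (m::nat)" using repB by blast
  thus "phi0 x \<in> carrier C" using phi0_eq v_carr by simp
next
  fix x y assume "x \<in> carrier B" "y \<in> carrier B"
  then obtain a1 m1 a2 m2 where a: "a1 \<in> carrier A" "x = i a1 \<otimes>\<^bsub>B\<^esub> w [^]\<^bsub>B\<^esub> (m1::nat)"
      "a2 \<in> carrier A" "y = i a2 \<otimes>\<^bsub>B\<^esub> w [^]\<^bsub>B\<^esub> (m2::nat)" using repB by metis
  obtain a2' where a2': "a2' \<in> carrier A" "w [^]\<^bsub>B\<^esub> m1 \<otimes>\<^bsub>B\<^esub> i a2 = i a2' \<otimes>\<^bsub>B\<^esub> w [^]\<^bsub>B\<^esub> (m1 + N)"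
      "v [^]\<^bsub>C\<^esub> m1 \<otimes>\<^bsub>C\<^esub> kap a2 = kap a2' \<otimes>\<^bsub>C\<^esub> v [^]\<^bsub>C\<^esub> (m1 + N)"
    using oreBC[OF oneideal a(3), of m1] by blast
  have "x \<otimes>\<^bsub>B\<^esub> y = i (a1 \<otimes> a2') \<otimes>\<^bsub>B\<^esub> w [^]\<^bsub>B\<^esub> (m1 + N + m2)"
    unfolding a(2,4) using B.mult_frac[OF w_carr _ _ _ a2'(2)] a a2' by simp
  hence "phi0 (x \<otimes>\<^bsub>B\<^esub> y) = kap (a1 \<otimes> a2') \<otimes>\<^bsub>C\<^esub> v [^]\<^bsub>C\<^esub> (m1 + N + m2)"
    by (simp only: phi0_eq[OF m_closed[OF a(1) a2'(1)]])
  also have "\<dots> = (kap a1 \<otimes>\<^bsub>C\<^esub> v [^]\<^bsub>C\<^esub> m1) \<otimes>\<^bsub>C\<^esub> (kap a2 \<otimes>\<^bsub>C\<^esub> v [^]\<^bsub>C\<^esub> m2)"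
    using C.mult_frac[OF v_carr _ _ _ a2'(3)] a a2' by simp
  finally show "phi0 (x \<otimes>\<^bsub>B\<^esub> y) = phi0 x \<otimes>\<^bsub>C\<^esub> phi0 y" using phi0_eq a by simp
next
  fix x y assume "x \<in> carrier B" "y \<in> carrier B"
  then obtain a1 m1 a2 m2 where a: "a1 \<in> carrier A" "x = i a1 \<otimes>\<^bsub>B\<^esub> w [^]\<^bsub>B\<^esub> (m1::nat)"
      "a2 \<in> carrier A" "y = i a2 \<otimes>\<^bsub>B\<^esub> w [^]\<^bsub>B\<^esub> (m2::nat)" using repB by metis
  have "x \<oplus>\<^bsub>B\<^esub> y = i (a1 \<otimes> s [^] m2 \<oplus> a2 \<otimes> s [^] m1) \<otimes>\<^bsub>B\<^esub> w [^]\<^bsub>B\<^esub> (m1 + m2)"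
    unfolding a(2,4) w_def using B.add_frac[OF u_unit] a s_carr by (simp add: i_pow)
  hence "phi0 (x \<oplus>\<^bsub>B\<^esub> y) = kap (a1 \<otimes> s [^] m2 \<oplus> a2 \<otimes> s [^] m1) \<otimes>\<^bsub>C\<^esub> v [^]\<^bsub>C\<^esub> (m1 + m2)"
    using a s_carr by (simp only: phi0_eq[of "a1 \<otimes> s [^] m2 \<oplus> a2 \<otimes> s [^] m1"] a_closed m_closed nat_pow_closed)
  also have "\<dots> = (kap a1 \<otimes>\<^bsub>C\<^esub> v [^]\<^bsub>C\<^esub> m1) \<oplus>\<^bsub>C\<^esub> (kap a2 \<otimes>\<^bsub>C\<^esub> v [^]\<^bsub>C\<^esub> m2)"
    unfolding v_def using C.add_frac[OF q_unit] a s_carr by (simp add: kap_pow)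
  finally show "phi0 (x \<oplus>\<^bsub>B\<^esub> y) = phi0 x \<oplus>\<^bsub>C\<^esub> phi0 y" using phi0_eq a by simp
next
  show "phi0 \<one>\<^bsub>B\<^esub> = \<one>\<^bsub>C\<^esub>" using phi0_i[of \<one>] by simp
qed

lemma phi0_surj: "phi0 ` carrier B = carrier C"
proof
  show "phi0 ` carrier B \<subseteq> carrier C" using ring_hom_closed[OF phi0_hom] by blast
  show "carrier C \<subseteq> phi0 ` carrier B"
  proof
    fix c assume "c \<in> carrier C"
    then obtain a m where "a \<in> carrier A" "c = kap a \<otimes>\<^bsub>C\<^esub> v [^]\<^bsub>C\<^esub> (m::nat)" using repC by blast
    moreover have "i a \<otimes>\<^bsub>B\<^esub> w [^]\<^bsub>B\<^esub> m \<in> carrier B" using \<open>a \<in> carrier A\<close> w_carr by simp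
    ultimately show "c \<in> phi0 ` carrier B" using phi0_eq by (metis image_eqI)
  qed
qed

end



locale L2 = L1 I A s N B i C k for I and A (structure) and s N B i C k +
  fixes \<phi>
  assumes phi_hom: "\<phi> \<in> ring_hom B C" and phi_i: "\<forall>a\<in>carrier A. \<phi> (i a) = kap a"

sublocale L2 \<subseteq> phiH: ring_hom_ring B C \<phi>
  using phi_hom by (intro ring_hom_ringI2 ringB ringC)

context L2 begin

lemma phi_u: "\<phi> u = q" unfolding u_def q_def using phi_i s_carr by simp

lemma phi_w: "\<phi> w = v"
proof -
  have wu: "w \<otimes>\<^bsub>B\<^esub> u = \<one>\<^bsub>B\<^esub>" "u \<otimes>\<^bsub>B\<^esub> w = \<one>\<^bsub>B\<^esub>" using u_unit unfolding w_def by auto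
  have "\<phi> w \<otimes>\<^bsub>C\<^esub> q = \<one>\<^bsub>C\<^esub>" using arg_cong[OF wu(1), of \<phi>] w_carr u_carr phi_u by simp
  moreover have "q \<otimes>\<^bsub>C\<^esub> \<phi> w = \<one>\<^bsub>C\<^esub>" using arg_cong[OF wu(2), of \<phi>] w_carr u_carr phi_u by simp
  ultimately have "inv\<^bsub>C\<^esub> q = \<phi> w" using q_carr w_carr by (intro C.inv_char) auto
  thus ?thesis unfolding v_def by simp
qed

lemma phi_frac: "a \<in> carrier A \<Longrightarrow> \<phi> (i a \<otimes>\<^bsub>B\<^esub> w [^]\<^bsub>B\<^esub> (m::nat)) = kap a \<otimes>\<^bsub>C\<^esub> v [^]\<^bsub>C\<^esub> m"
  using w_carr phi_i phi_w by (simp add: phiH.hom_nat_pow)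

lemma phi_frac_l: "a \<in> carrier A \<Longrightarrow> \<phi> (w [^]\<^bsub>B\<^esub> (m::nat) \<otimes>\<^bsub>B\<^esub> i a) = v [^]\<^bsub>C\<^esub> m \<otimes>\<^bsub>C\<^esub> kap a"
  using w_carr phi_i phi_w by (simp add: phiH.hom_nat_pow)

lemma ker_rep: assumes b: "b \<in> a_kernel B C \<phi>"
  shows "\<exists>y\<in>I. \<exists>m::nat. b = i y \<otimes>\<^bsub>B\<^esub> w [^]\<^bsub>B\<^esub> m"
proof -
  have bc: "b \<in> carrier B" "\<phi> b = \<zero>\<^bsub>C\<^esub>" using b unfolding a_kernel_def' by auto
  obtain a m where a: "a \<in> carrier A" "b = i a \<otimes>\<^bsub>B\<^esub> w [^]\<^bsub>B\<^esub> (m::nat)" using repB[OF bc(1)] by blast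
  have "kap a \<otimes>\<^bsub>C\<^esub> inv\<^bsub>C\<^esub> q [^]\<^bsub>C\<^esub> m = \<zero>\<^bsub>C\<^esub> \<otimes>\<^bsub>C\<^esub> inv\<^bsub>C\<^esub> q [^]\<^bsub>C\<^esub> m"
    using bc(2) phi_frac[OF a(1), of m] a(2) v_carr unfolding v_def by simp
  hence "kap a = \<zero>\<^bsub>C\<^esub>" using C.unit_rcancel[OF q_unit] a(1) by simp
  then obtain j :: nat where j: "a \<otimes> s [^] j \<in> I" using kerC a(1) by blast
  have "b = (i a \<otimes>\<^bsub>B\<^esub> u [^]\<^bsub>B\<^esub> j) \<otimes>\<^bsub>B\<^esub> w [^]\<^bsub>B\<^esub> (m + j)"
    unfolding a(2) w_def using B.unit_frac_ext[OF u_unit] a(1) by simp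
  also have "\<dots> = i (a \<otimes> s [^] j) \<otimes>\<^bsub>B\<^esub> w [^]\<^bsub>B\<^esub> (m + j)" using a(1) s_carr by (simp add: i_pow)
  finally show ?thesis using j by blast
qed

lemma ker_rep_l: assumes b: "b \<in> a_kernel B C \<phi>"
  shows "\<exists>y\<in>I. \<exists>m::nat. b = w [^]\<^bsub>B\<^esub> m \<otimes>\<^bsub>B\<^esub> i y"
proof -
  have bc: "b \<in> carrier B" "\<phi> b = \<zero>\<^bsub>C\<^esub>" using b unfolding a_kernel_def' by auto
  obtain a m where a: "a \<in> carrier A" "b = w [^]\<^bsub>B\<^esub> (m::nat) \<otimes>\<^bsub>B\<^esub> i a" using repB_left[OF bc(1)] by blast
  have "inv\<^bsub>C\<^esub> q [^]\<^bsub>C\<^esub> m \<otimes>\<^bsub>C\<^esub> kap a = inv\<^bsub>C\<^esub> q [^]\<^bsub>C\<^esub> m \<otimes>\<^bsub>C\<^esub> \<zero>\<^bsub>C\<^esub>"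
    using bc(2) phi_frac_l[OF a(1), of m] a(2) v_carr unfolding v_def by simp
  hence "kap a = \<zero>\<^bsub>C\<^esub>" using C.unit_lcancel[OF q_unit] a(1) by simp
  then obtain j :: nat where j: "a \<otimes> s [^] j \<in> I" using kerC a(1) by blast
  have sj: "s [^] j \<in> carrier A" using s_carr by simp
  have "s [^] j \<otimes> a = (s [^] j \<otimes> a \<ominus> a \<otimes> s [^] j) \<oplus> a \<otimes> s [^] j"
    using sj a(1) by (simp add: minus_eq a_assoc l_neg)
  also have "\<dots> \<in> I" using comm_mod[OF sj a(1)] j by (simp add: a_closed)
  finally have j': "s [^] j \<otimes> a \<in> I" .
  have "b = w [^]\<^bsub>B\<^esub> (m + j) \<otimes>\<^bsub>B\<^esub> (u [^]\<^bsub>B\<^esub> j \<otimes>\<^bsub>B\<^esub> i a)"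
    unfolding a(2) w_def using B.unit_frac_ext_left[OF u_unit] a(1) by simp
  also have "\<dots> = w [^]\<^bsub>B\<^esub> (m + j) \<otimes>\<^bsub>B\<^esub> i (s [^] j \<otimes> a)" using a(1) s_carr by (simp add: i_pow)
  finally show ?thesis using j' by blast
qed

lemma ext_right_sub: "ext_right B i I \<subseteq> a_kernel B C \<phi>"
proof
  fix z assume "z \<in> ext_right B i I"
  then obtain ps where z: "z = foldr (\<lambda>p acc. (i (fst p) \<otimes>\<^bsub>B\<^esub> snd p) \<oplus>\<^bsub>B\<^esub> acc) ps \<zero>\<^bsub>B\<^esub>"
      "set ps \<subseteq> I \<times> carrier B" unfolding ext_right_def by blast
  have "foldr (\<lambda>p acc. (i (fst p) \<otimes>\<^bsub>B\<^esub> snd p) \<oplus>\<^bsub>B\<^esub> acc) ps \<zero>\<^bsub>B\<^esub> \<in> carrier B \<and>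
        \<phi> (foldr (\<lambda>p acc. (i (fst p) \<otimes>\<^bsub>B\<^esub> snd p) \<oplus>\<^bsub>B\<^esub> acc) ps \<zero>\<^bsub>B\<^esub>) = \<zero>\<^bsub>C\<^esub>"
    using z(2)
  proof (induct ps)
    case (Cons p ps)
    have p: "fst p \<in> I" "snd p \<in> carrier B" "fst p \<in> carrier A" using Cons(2) a_subset by auto
    show ?case using Cons p phi_i kap_I[OF p(1)] by simp
  qed simp
  thus "z \<in> a_kernel B C \<phi>" unfolding a_kernel_def' z(1) by blast
qed

lemma ext_left_sub: "ext_left B i I \<subseteq> a_kernel B C \<phi>"
proof
  fix z assume "z \<in> ext_left B i I"
  then obtain ps where z: "z = foldr (\<lambda>p acc. (snd p \<otimes>\<^bsub>B\<^esub> i (fst p)) \<oplus>\<^bsub>B\<^esub> acc) ps \<zero>\<^bsub>B\<^esub>"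
      "set ps \<subseteq> I \<times> carrier B" unfolding ext_left_def by blast
  have "foldr (\<lambda>p acc. (snd p \<otimes>\<^bsub>B\<^esub> i (fst p)) \<oplus>\<^bsub>B\<^esub> acc) ps \<zero>\<^bsub>B\<^esub> \<in> carrier B \<and>
        \<phi> (foldr (\<lambda>p acc. (snd p \<otimes>\<^bsub>B\<^esub> i (fst p)) \<oplus>\<^bsub>B\<^esub> acc) ps \<zero>\<^bsub>B\<^esub>) = \<zero>\<^bsub>C\<^esub>"
    using z(2)
  proof (induct ps)
    case (Cons p ps)
    have p: "fst p \<in> I" "snd p \<in> carrier B" "fst p \<in> carrier A" using Cons(2) a_subset by auto
    show ?case using Cons p phi_i kap_I[OF p(1)] by simp
  qed simp
  thus "z \<in> a_kernel B C \<phi>" unfolding a_kernel_def' z(1) by blast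
qed

lemma ker_sub_right: "a_kernel B C \<phi> \<subseteq> ext_right B i I"
proof
  fix b assume "b \<in> a_kernel B C \<phi>"
  then obtain y m where y: "y \<in> I" "b = i y \<otimes>\<^bsub>B\<^esub> w [^]\<^bsub>B\<^esub> (m::nat)" using ker_rep by blast
  have "b = foldr (\<lambda>p acc. (i (fst p) \<otimes>\<^bsub>B\<^esub> snd p) \<oplus>\<^bsub>B\<^esub> acc) [(y, w [^]\<^bsub>B\<^esub> m)] \<zero>\<^bsub>B\<^esub>"
    using y a_subset w_carr by auto
  moreover have "set [(y, w [^]\<^bsub>B\<^esub> m)] \<subseteq> I \<times> carrier B" using y w_carr by auto
  ultimately show "b \<in> ext_right B i I" unfolding ext_right_def by blast
qed

lemma ker_sub_left: "a_kernel B C \<phi> \<subseteq> ext_left B i I"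
proof
  fix b assume "b \<in> a_kernel B C \<phi>"
  then obtain y m where y: "y \<in> I" "b = w [^]\<^bsub>B\<^esub> (m::nat) \<otimes>\<^bsub>B\<^esub> i y" using ker_rep_l by blast
  have "b = foldr (\<lambda>p acc. (snd p \<otimes>\<^bsub>B\<^esub> i (fst p)) \<oplus>\<^bsub>B\<^esub> acc) [(y, w [^]\<^bsub>B\<^esub> m)] \<zero>\<^bsub>B\<^esub>"
    using y a_subset w_carr by auto
  moreover have "set [(y, w [^]\<^bsub>B\<^esub> m)] \<subseteq> I \<times> carrier B" using y w_carr by auto
  ultimately show "b \<in> ext_left B i I" unfolding ext_left_def by blast
qed

lemma prod_rep: "set xs \<subseteq> a_kernel B C \<phi> \<Longrightarrow>
   \<exists>x m. x \<in> ideal_pow A I (length xs) \<and> list_prod B xs = i x \<otimes>\<^bsub>B\<^esub> w [^]\<^bsub>B\<^esub> (m::nat)"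
proof (induct xs)
  case Nil
  have "\<one> \<in> ideal_pow A I 0" using ideal_pow_0 by simp
  thus ?case using w_carr by (intro exI[of _ \<one>] exI[of _ "0::nat"]) simp
next
  case (Cons b xs)
  then obtain x m where x: "x \<in> ideal_pow A I (length xs)" "list_prod B xs = i x \<otimes>\<^bsub>B\<^esub> w [^]\<^bsub>B\<^esub> (m::nat)"
    by auto
  have bk: "b \<in> a_kernel B C \<phi>" using Cons(2) by simp
  obtain y m1 where y: "y \<in> I" "b = i y \<otimes>\<^bsub>B\<^esub> w [^]\<^bsub>B\<^esub> (m1::nat)" using ker_rep[OF bk] by blast
  obtain x' where x': "x' \<in> ideal_pow A I (length xs)"
      "w [^]\<^bsub>B\<^esub> m1 \<otimes>\<^bsub>B\<^esub> i x = i x' \<otimes>\<^bsub>B\<^esub> w [^]\<^bsub>B\<^esub> (m1 + N)"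
    using oreBC[OF ideal_pow_ideal[OF a_subset] x(1), of m1] by blast
  have c: "x \<in> carrier A" "x' \<in> carrier A" "y \<in> carrier A" using x(1) x'(1) y(1) ipow_carr a_subset by auto
  have "list_prod B (b # xs) = (i y \<otimes>\<^bsub>B\<^esub> w [^]\<^bsub>B\<^esub> m1) \<otimes>\<^bsub>B\<^esub> (i x \<otimes>\<^bsub>B\<^esub> w [^]\<^bsub>B\<^esub> m)"
    using x(2) y(2) by simp
  also have "\<dots> = (i y \<otimes>\<^bsub>B\<^esub> i x') \<otimes>\<^bsub>B\<^esub> w [^]\<^bsub>B\<^esub> (m1 + N + m)"
    using B.mult_frac[OF w_carr _ _ _ x'(2)] c by simp
  also have "\<dots> = i (y \<otimes> x') \<otimes>\<^bsub>B\<^esub> w [^]\<^bsub>B\<^esub> (m1 + N + m)" using c by simp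
  finally show ?case using ideal_pow_mult_left[OF y(1) x'(1)] by auto
qed

lemma ker_nil: "ideal_pow B (a_kernel B C \<phi>) N = {\<zero>\<^bsub>B\<^esub>}"
proof -
  have 1: "list_prod B xs = \<zero>\<^bsub>B\<^esub>" if "length xs = N" "set xs \<subseteq> a_kernel B C \<phi>" for xs
  proof -
    note h = that
    obtain x m where "x \<in> ideal_pow A I (length xs)" "list_prod B xs = i x \<otimes>\<^bsub>B\<^esub> w [^]\<^bsub>B\<^esub> (m::nat)"
      using prod_rep[OF h(2)] by blast
    thus ?thesis using nilN h(1) w_carr by simp
  qed
  have z: "\<zero>\<^bsub>B\<^esub> \<in> a_kernel B C \<phi>" unfolding a_kernel_def' by simp
  have "{list_prod B xs |xs. length xs = N \<and> set xs \<subseteq> a_kernel B C \<phi>} = {\<zero>\<^bsub>B\<^esub>}"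
  proof
    show "{list_prod B xs |xs. length xs = N \<and> set xs \<subseteq> a_kernel B C \<phi>} \<subseteq> {\<zero>\<^bsub>B\<^esub>}" using 1 by blast
    have "length (replicate N \<zero>\<^bsub>B\<^esub>) = N" "set (replicate N \<zero>\<^bsub>B\<^esub>) \<subseteq> a_kernel B C \<phi>" using z by auto
    thus "{\<zero>\<^bsub>B\<^esub>} \<subseteq> {list_prod B xs |xs. length xs = N \<and> set xs \<subseteq> a_kernel B C \<phi>}"
      using 1 by (metis (mono_tags, lifting) empty_subsetI insert_subset mem_Collect_eq)
  qed
  thus ?thesis unfolding ideal_pow_def using B.genideal_zero by simp
qed

lemma ker_elem_nil: "t \<in> a_kernel B C \<phi> \<Longrightarrow> t [^]\<^bsub>B\<^esub> N = \<zero>\<^bsub>B\<^esub>"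
proof -
  assume t: "t \<in> a_kernel B C \<phi>"
  hence tc: "t \<in> carrier B" unfolding a_kernel_def' by simp
  have st: "set (replicate N t) \<subseteq> a_kernel B C \<phi>" using t by (induct N) auto
  obtain x m where "x \<in> ideal_pow A I (length (replicate N t))"
     "list_prod B (replicate N t) = i x \<otimes>\<^bsub>B\<^esub> w [^]\<^bsub>B\<^esub> (m::nat)"
    using prod_rep[OF st] by blast
  thus ?thesis using nilN w_carr B.list_prod_replicate[OF tc] by simp
qed

end

context L1 begin

lemma L2_phi0: "L2 I A s N B i C k phi0"
  by (intro L2.intro L2_axioms.intro L1_axioms phi0_hom) (auto simp: phi0_i)

lemma units_iff: assumes a: "a \<in> carrier A"
  shows "i a \<in> Units B \<longleftrightarrow> kap a \<in> Units C"
proof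
  assume "i a \<in> Units B"
  thus "kap a \<in> Units C" using ring_hom_Units[OF phi0_hom] phi0_i[OF a] by metis
next
  assume ku: "kap a \<in> Units C"
  interpret P: L2 I A s N B i C k phi0 by (rule L2_phi0)
  have ia: "i a \<in> carrier B" using a by simp
  obtain b where b: "b \<in> carrier B" "phi0 b = inv\<^bsub>C\<^esub> (kap a)"
    using phi0_surj ku by (metis C.Units_inv_closed imageE)
  define t where "t = \<one>\<^bsub>B\<^esub> \<ominus>\<^bsub>B\<^esub> i a \<otimes>\<^bsub>B\<^esub> b"
  define t' where "t' = \<one>\<^bsub>B\<^esub> \<ominus>\<^bsub>B\<^esub> b \<otimes>\<^bsub>B\<^esub> i a"
  have tc: "t \<in> carrier B" "t' \<in> carrier B" using b ia unfolding t_def t'_def by auto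
  have "phi0 t = \<one>\<^bsub>C\<^esub> \<ominus>\<^bsub>C\<^esub> kap a \<otimes>\<^bsub>C\<^esub> inv\<^bsub>C\<^esub> (kap a)"
    unfolding t_def using hom_minus[OF P.phiH.is_ring_hom_ring] b ia phi0_i[OF a] by simp
  hence "phi0 t = \<zero>\<^bsub>C\<^esub>" using ku by simp
  hence tk: "t \<in> a_kernel B C phi0" using tc unfolding a_kernel_def' by simp
  have "phi0 t' = \<one>\<^bsub>C\<^esub> \<ominus>\<^bsub>C\<^esub> inv\<^bsub>C\<^esub> (kap a) \<otimes>\<^bsub>C\<^esub> kap a"
    unfolding t'_def using hom_minus[OF P.phiH.is_ring_hom_ring] b ia phi0_i[OF a] by simp
  hence "phi0 t' = \<zero>\<^bsub>C\<^esub>" using ku by simp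
  hence tk': "t' \<in> a_kernel B C phi0" using tc unfolding a_kernel_def' by simp
  have U1: "\<one>\<^bsub>B\<^esub> \<ominus>\<^bsub>B\<^esub> t \<in> Units B" using B.one_minus_nil_unit[OF tc(1) P.ker_elem_nil[OF tk]] .
  have U2: "\<one>\<^bsub>B\<^esub> \<ominus>\<^bsub>B\<^esub> t' \<in> Units B" using B.one_minus_nil_unit[OF tc(2) P.ker_elem_nil[OF tk']] .
  have e1: "\<one>\<^bsub>B\<^esub> \<ominus>\<^bsub>B\<^esub> t = i a \<otimes>\<^bsub>B\<^esub> b" unfolding t_def using b ia by algebra
  have e2: "\<one>\<^bsub>B\<^esub> \<ominus>\<^bsub>B\<^esub> t' = b \<otimes>\<^bsub>B\<^esub> i a" unfolding t'_def using b ia by algebra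
  have r: "i a \<otimes>\<^bsub>B\<^esub> (b \<otimes>\<^bsub>B\<^esub> inv\<^bsub>B\<^esub> (i a \<otimes>\<^bsub>B\<^esub> b)) = \<one>\<^bsub>B\<^esub>"
    using U1 unfolding e1 using b ia by (simp add: B.m_assoc[symmetric])
  have l: "(inv\<^bsub>B\<^esub> (b \<otimes>\<^bsub>B\<^esub> i a) \<otimes>\<^bsub>B\<^esub> b) \<otimes>\<^bsub>B\<^esub> i a = \<one>\<^bsub>B\<^esub>"
    using U2 unfolding e2 using b ia by (simp add: B.m_assoc)
  show "i a \<in> Units B"
    by (rule B.two_sided_inv_Units[OF ia _ r _ l]) (use U1 U2 b e1 e2 in auto)
qed

end



theorem lemma2p10:
  fixes A :: "'a ring" and I :: "'a set" and s :: 'a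
  assumes "ring A" and "ideal I A" and "nilpotent_ideal A I"
    and "gr_commutative A I" and "s \<in> carrier A"
  shows "denominator_set A (powers A s) \<and>
         (\<forall>(B :: 'b ring) i (C :: 'c ring) k.
           ring_of_fractions A (powers A s) B i \<and>
           ring_of_fractions (A Quot I) (powers (A Quot I) (I +>\<^bsub>A\<^esub> s)) C k \<longrightarrow>
           (\<exists>\<phi>. \<phi> \<in> ring_hom B C \<and> (\<forall>a\<in>carrier A. \<phi> (i a) = k (I +>\<^bsub>A\<^esub> a))
                 \<and> \<phi> ` carrier B = carrier C) \<and>
           (\<forall>\<phi>. \<phi> \<in> ring_hom B C \<and> (\<forall>a\<in>carrier A. \<phi> (i a) = k (I +>\<^bsub>A\<^esub> a)) \<longrightarrow>
                 a_kernel B C \<phi> = ext_right B i I \<and>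
                 a_kernel B C \<phi> = ext_left B i I \<and>
                 ideal (a_kernel B C \<phi>) B \<and>
                 nilpotent_ideal B (a_kernel B C \<phi>)) \<and>
           (\<forall>a\<in>carrier A. i a \<in> Units B \<longleftrightarrow> k (I +>\<^bsub>A\<^esub> a) \<in> Units C))"
proof -
  obtain N where nil: "ideal_pow A I N = {\<zero>\<^bsub>A\<^esub>}" using assms(3) unfolding nilpotent_ideal_def by blast
  interpret L0 I A s N using assms nil by (intro L0.intro L0_axioms.intro) auto
  have part2: "(\<exists>\<phi>. \<phi> \<in> ring_hom B C \<and> (\<forall>a\<in>carrier A. \<phi> (i a) = k (I +>\<^bsub>A\<^esub> a))
                 \<and> \<phi> ` carrier B = carrier C) \<and>
           (\<forall>\<phi>. \<phi> \<in> ring_hom B C \<and> (\<forall>a\<in>carrier A. \<phi> (i a) = k (I +>\<^bsub>A\<^esub> a)) \<longrightarrow>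
                 a_kernel B C \<phi> = ext_right B i I \<and>
                 a_kernel B C \<phi> = ext_left B i I \<and>
                 ideal (a_kernel B C \<phi>) B \<and>
                 nilpotent_ideal B (a_kernel B C \<phi>)) \<and>
           (\<forall>a\<in>carrier A. i a \<in> Units B \<longleftrightarrow> k (I +>\<^bsub>A\<^esub> a) \<in> Units C)"
    if fr: "ring_of_fractions A (powers A s) B i"
       "ring_of_fractions (A Quot I) (powers (A Quot I) (I +>\<^bsub>A\<^esub> s)) C k"
    for B :: "'b ring" and i and C :: "'c ring" and k
  proof -
    interpret L1 I A s N B i C k by (intro L1.intro L1_axioms.intro L0_axioms fr)
    have kk: "k (I +>\<^bsub>A\<^esub> a) = kap a" for a by (simp add: kap_def)
    have e: "\<exists>\<phi>. \<phi> \<in> ring_hom B C \<and> (\<forall>a\<in>carrier A. \<phi> (i a) = k (I +>\<^bsub>A\<^esub> a))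
                 \<and> \<phi> ` carrier B = carrier C"
      using phi0_hom phi0_i phi0_surj unfolding kk by blast
    have f: "a_kernel B C \<phi> = ext_right B i I \<and>
                 a_kernel B C \<phi> = ext_left B i I \<and>
                 ideal (a_kernel B C \<phi>) B \<and>
                 nilpotent_ideal B (a_kernel B C \<phi>)"
      if "\<phi> \<in> ring_hom B C" "\<forall>a\<in>carrier A. \<phi> (i a) = k (I +>\<^bsub>A\<^esub> a)" for \<phi>
    proof -
      interpret L2 I A s N B i C k \<phi>
        using that unfolding kk by (intro L2.intro L2_axioms.intro L1_axioms) auto
      show ?thesis
        using ext_right_sub ker_sub_right ext_left_sub ker_sub_left phiH.kernel_is_ideal ker_nil
        unfolding nilpotent_ideal_def by blast
    qed
    show ?thesis using e f units_iff unfolding kk by blast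
  qed
  show ?thesis using denom part2 by blast
qed


end
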